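(* Let $L$ be a linear forest with $k$ vertices. Let $G$ and $G'$ be graphs, each of which is a disjoint union of paths each having at least $k-1$ vertices, such that $|V(G)|=|V(G')|$ and $|E(G)|=|E(G')|$. Then $s(G,L)=s(G',L)$; that is, the number of induced copies of $L$ in such a graph depends only on $L$, the number of vertices, and the number of edges.
   Context: A linear forest is a disjoint union of paths. For graphs $G$ and $H$, $s(G,H)$ is the number of vertex subsets $X\subseteq V(G)$ such that the induced subgraph $G[X]$ is isomorphic to $H$. *)

theory Defs
  imports Main "HOL-Library.Disjoint_Sets"
begin

text \<open>A (simple, undirected) graph is given by a vertex set V and an edge set E,
  each edge being a two-element subset of V.\<close>

definition induced_edges :: "'a set set \<Rightarrow> 'a set \<Rightarrow> 'a set set" where
  "induced_edges E X = {e \<in> E. e \<subseteq> X}"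

definition is_path_graph :: "'a set \<Rightarrow> 'a set set \<Rightarrow> bool" where
  "is_path_graph V E \<longleftrightarrow> (\<exists>xs. xs \<noteq> [] \<and> distinct xs \<and> set xs = V \<and>
      E = {{xs ! i, xs ! Suc i} | i. Suc i < length xs})"

definition path_decomposition :: "'a set \<Rightarrow> 'a set set \<Rightarrow> 'a set set \<Rightarrow> bool" where
  "path_decomposition V E P \<longleftrightarrow> partition_on V P \<and>
      (\<forall>p\<in>P. is_path_graph p (induced_edges E p)) \<and>
      (\<forall>e\<in>E. \<exists>p\<in>P. e \<subseteq> p)"

definition linear_forest :: "'a set \<Rightarrow> 'a set set \<Rightarrow> bool" where
  "linear_forest V E \<longleftrightarrow> (\<exists>P. path_decomposition V E P)"

definition graph_iso :: "'a set \<Rightarrow> 'a set set \<Rightarrow> 'b set \<Rightarrow> 'b set set \<Rightarrow> bool" where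
  "graph_iso V E W F \<longleftrightarrow> (\<exists>f. bij_betw f V W \<and>
      (\<forall>x\<in>V. \<forall>y\<in>V. {x, y} \<in> E \<longleftrightarrow> {f x, f y} \<in> F))"

definition induced_count :: "'a set \<Rightarrow> 'a set set \<Rightarrow> 'b set \<Rightarrow> 'b set set \<Rightarrow> nat" where
  "induced_count V E W F = card {X. X \<subseteq> V \<and> graph_iso X (induced_edges E X) W F}"

end

theory Submission
  imports Defs
begin

definition pe :: "nat set \<Rightarrow> nat set set" where
  "pe X = {{i, Suc i} | i. i \<in> X \<and> Suc i \<in> X}"

lemma pe_mem: "{x,y} \<in> pe S \<longleftrightarrow> x \<in> S \<and> y \<in> S \<and> (y = Suc x \<or> x = Suc y)"
  unfolding pe_def by (auto simp: doubleton_eq_iff)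

lemma iso_sym:
  assumes "graph_iso A EA B EB" shows "graph_iso B EB A EA"
proof -
  obtain f where f: "bij_betw f A B" "\<forall>x\<in>A. \<forall>y\<in>A. {x,y}\<in>EA \<longleftrightarrow> {f x, f y} \<in> EB"
    using assms unfolding graph_iso_def by blast
  let ?g = "inv_into A f"
  have g: "bij_betw ?g B A" using f(1) by (rule bij_betw_inv_into)
  have "\<forall>x\<in>B. \<forall>y\<in>B. {x,y}\<in>EB \<longleftrightarrow> {?g x, ?g y} \<in> EA"
  proof (intro ballI)
    fix x y assume xy: "x \<in> B" "y \<in> B"
    have gx: "?g x \<in> A" "f (?g x) = x" using xy f(1) g
      by (auto simp: bij_betw_def f_inv_into_f inv_into_into)
    have gy: "?g y \<in> A" "f (?g y) = y" using xy f(1) g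
      by (auto simp: bij_betw_def f_inv_into_f inv_into_into)
    show "{x,y}\<in>EB \<longleftrightarrow> {?g x, ?g y} \<in> EA" using f(2) gx gy by metis
  qed
  thus ?thesis using g unfolding graph_iso_def by blast
qed

lemma iso_trans:
  assumes "graph_iso A EA B EB" "graph_iso B EB C EC" shows "graph_iso A EA C EC"
proof -
  obtain f where f: "bij_betw f A B" "\<forall>x\<in>A. \<forall>y\<in>A. {x,y}\<in>EA \<longleftrightarrow> {f x, f y} \<in> EB"
    using assms(1) unfolding graph_iso_def by blast
  obtain g where g: "bij_betw g B C" "\<forall>x\<in>B. \<forall>y\<in>B. {x,y}\<in>EB \<longleftrightarrow> {g x, g y} \<in> EC"
    using assms(2) unfolding graph_iso_def by blast
  have "bij_betw (g \<circ> f) A C" using f(1) g(1) by (rule bij_betw_trans)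
  moreover have "\<forall>x\<in>A. \<forall>y\<in>A. {x,y}\<in>EA \<longleftrightarrow> {(g\<circ>f) x, (g\<circ>f) y} \<in> EC"
    using f g bij_betwE[OF f(1)] by simp
  ultimately show ?thesis unfolding graph_iso_def by blast
qed

lemma iso_ok:
  assumes "graph_iso A EA B EB"
  shows "graph_iso A EA W F \<longleftrightarrow> graph_iso B EB W F"
  using assms iso_sym iso_trans by metis

lemma pe_adj:
  assumes "x \<in> S" "y \<in> S"
  shows "{x,y} \<in> pe S \<longleftrightarrow> (y = Suc x \<or> x = Suc y)"
  using assms pe_mem by blast

lemma run_nonadj:
  assumes "x \<in> {p..<p+r}" "y \<in> A" "A \<inter> {p..<p+r} = {}" "p+r \<notin> A" "p - 1 \<notin> A" "0 < p"
  shows "y \<noteq> Suc x \<and> x \<noteq> Suc y"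
proof
  show "y \<noteq> Suc x"
  proof
    assume e: "y = Suc x"
    show False
    proof (cases "Suc x < p + r")
      case True thus False using assms e by auto
    next
      case False hence "Suc x = p + r" using assms(1) by auto
      thus False using assms e by auto
    qed
  qed
  show "x \<noteq> Suc y"
  proof
    assume e: "x = Suc y"
    show False
    proof (cases "p \<le> y")
      case True thus False using assms e by auto
    next
      case False hence "y = p - 1" using assms(1) e by auto
      thus False using assms by auto
    qed
  qed
qed

lemma run_shift_iso:
  assumes "A \<inter> {p..<p+r} = {}" "A \<inter> {q..<q+r} = {}" "p+r \<notin> A" "q+r \<notin> A"
    "0 < p" "0 < q" "p - 1 \<notin> A" "q - 1 \<notin> A"
  shows "graph_iso (A \<union> {p..<p+r}) (pe (A \<union> {p..<p+r})) (A \<union> {q..<q+r}) (pe (A \<union> {q..<q+r}))"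
proof -
  define f where "f x = (if x \<in> {p..<p+r} then x + q - p else x)" for x
  define g where "g x = (if x \<in> {q..<q+r} then x + p - q else x)" for x
  have bij: "bij_betw f (A \<union> {p..<p+r}) (A \<union> {q..<q+r})"
  proof (rule bij_betw_byWitness[where f'=g])
    show "\<forall>a\<in>A \<union> {p..<p + r}. g (f a) = a" using assms unfolding f_def g_def by auto
    show "\<forall>a'\<in>A \<union> {q..<q + r}. f (g a') = a'" using assms unfolding f_def g_def by auto
    show "f ` (A \<union> {p..<p + r}) \<subseteq> A \<union> {q..<q + r}" using assms unfolding f_def by auto
    show "g ` (A \<union> {q..<q + r}) \<subseteq> A \<union> {p..<p + r}" using assms unfolding g_def by auto
  qed
  have key: "(y = Suc x \<or> x = Suc y) \<longleftrightarrow> (f y = Suc (f x) \<or> f x = Suc (f y))"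
    if x: "x \<in> A \<union> {p..<p+r}" and y: "y \<in> A \<union> {p..<p+r}" for x y
  proof (cases "x \<in> A")
    case xA: True
    show ?thesis
    proof (cases "y \<in> A")
      case True thus ?thesis using xA assms unfolding f_def by auto
    next
      case False
      hence yr: "y \<in> {p..<p+r}" using y by auto
      have fy: "f y \<in> {q..<q+r}" using yr unfolding f_def by auto
      have fx: "f x = x" using xA assms unfolding f_def by auto
      show ?thesis using run_nonadj[OF yr xA assms(1,3,7,5)] run_nonadj[OF fy xA assms(2,4,8,6)] fx by auto
    qed
  next
    case False
    hence xr: "x \<in> {p..<p+r}" using x by auto
    have fx: "f x \<in> {q..<q+r}" using xr unfolding f_def by auto
    show ?thesis
    proof (cases "y \<in> A")
      case yA: True
      have fy: "f y = y" using yA assms unfolding f_def by auto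
      show ?thesis using run_nonadj[OF xr yA assms(1,3,7,5)] run_nonadj[OF fx yA assms(2,4,8,6)] fy by auto
    next
      case False
      hence yr: "y \<in> {p..<p+r}" using y by auto
      thus ?thesis using xr unfolding f_def by auto
    qed
  qed
  have "\<forall>x\<in>A \<union> {p..<p+r}. \<forall>y\<in>A \<union> {p..<p+r}. {x,y} \<in> pe (A \<union> {p..<p+r}) \<longleftrightarrow> {f x, f y} \<in> pe (A \<union> {q..<q+r})"
  proof (intro ballI)
    fix x y assume x: "x \<in> A \<union> {p..<p+r}" and y: "y \<in> A \<union> {p..<p+r}"
    have fx: "f x \<in> A \<union> {q..<q+r}" "f y \<in> A \<union> {q..<q+r}" using bij x y by (auto simp: bij_betw_def)
    show "{x,y} \<in> pe (A \<union> {p..<p+r}) \<longleftrightarrow> {f x, f y} \<in> pe (A \<union> {q..<q+r})"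
      unfolding pe_adj[OF x y] pe_adj[OF fx] using key[OF x y] .
  qed
  thus ?thesis using bij unfolding graph_iso_def by blast
qed



definition okK :: "'b set \<Rightarrow> 'b set set \<Rightarrow> nat set \<Rightarrow> nat set \<Rightarrow> bool" where
  "okK W F K X \<longleftrightarrow> graph_iso (X \<union> K) (pe (X \<union> K)) W F"

definition cnt :: "'b set \<Rightarrow> 'b set set \<Rightarrow> nat set \<Rightarrow> nat set \<Rightarrow> nat" where
  "cnt W F D K = card {X. X \<subseteq> D \<and> okK W F K X}"

lemma okK_card:
  assumes "okK W F K X" "finite W" "X \<inter> K = {}"
  shows "finite X \<and> card X + card K = card W"
proof -
  obtain f where f: "bij_betw f (X \<union> K) W" using assms(1) unfolding okK_def graph_iso_def by blast
  have fin: "finite (X \<union> K)" using bij_betw_finite[OF f] assms(2) by simp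
  have "card (X \<union> K) = card W" using bij_betw_same_card[OF f] .
  moreover have "card (X \<union> K) = card X + card K" using fin assms(3) by (simp add: card_Un_disjoint)
  ultimately show ?thesis using fin by simp
qed

lemma fin_sub_family: "finite D \<Longrightarrow> finite {X. X \<subseteq> D \<and> P X}"
  by (rule finite_subset[of _ "Pow D"]) auto

lemma cnt_split:
  assumes "finite D" "v \<notin> D"
  shows "cnt W F (insert v D) K = cnt W F D K + card {X. X \<subseteq> insert v D \<and> v \<in> X \<and> okK W F K X}"
proof -
  have eq: "{X. X \<subseteq> insert v D \<and> okK W F K X} = {X. X \<subseteq> D \<and> okK W F K X} \<union> {X. X \<subseteq> insert v D \<and> v \<in> X \<and> okK W F K X}"
    by auto
  have "card ({X. X \<subseteq> D \<and> okK W F K X} \<union> {X. X \<subseteq> insert v D \<and> v \<in> X \<and> okK W F K X})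
     = card {X. X \<subseteq> D \<and> okK W F K X} + card {X. X \<subseteq> insert v D \<and> v \<in> X \<and> okK W F K X}"
    by (rule card_Un_disjoint) (use assms in \<open>auto intro: fin_sub_family\<close>)
  thus ?thesis unfolding cnt_def eq .
qed

lemma card_run_remove:
  assumes "R \<subseteq> D" "g \<notin> R"
  shows "card {X. X \<subseteq> D \<and> R \<subseteq> X \<and> g \<notin> X \<and> P X} = card {Z. Z \<subseteq> D - R - {g} \<and> P (Z \<union> R)}"
proof -
  have "bij_betw (\<lambda>Z. Z \<union> R) {Z. Z \<subseteq> D - R - {g} \<and> P (Z \<union> R)} {X. X \<subseteq> D \<and> R \<subseteq> X \<and> g \<notin> X \<and> P X}"
  proof (rule bij_betw_byWitness[where f'="\<lambda>X. X - R"])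
    show "\<forall>a\<in>{Z. Z \<subseteq> D - R - {g} \<and> P (Z \<union> R)}. a \<union> R - R = a" by auto
    show "\<forall>a'\<in>{X. X \<subseteq> D \<and> R \<subseteq> X \<and> g \<notin> X \<and> P X}. a' - R \<union> R = a'" by auto
    show "(\<lambda>Z. Z \<union> R) ` {Z. Z \<subseteq> D - R - {g} \<and> P (Z \<union> R)} \<subseteq> {X. X \<subseteq> D \<and> R \<subseteq> X \<and> g \<notin> X \<and> P X}"
      using assms by auto
    show "(\<lambda>X. X - R) ` {X. X \<subseteq> D \<and> R \<subseteq> X \<and> g \<notin> X \<and> P X} \<subseteq> {Z. Z \<subseteq> D - R - {g} \<and> P (Z \<union> R)}"
    proof
      fix Z assume "Z \<in> (\<lambda>X. X - R) ` {X. X \<subseteq> D \<and> R \<subseteq> X \<and> g \<notin> X \<and> P X}"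
      then obtain X where X: "X \<subseteq> D" "R \<subseteq> X" "g \<notin> X" "P X" and Z: "Z = X - R" by auto
      have "Z \<union> R = X" using X Z by auto
      thus "Z \<in> {Z. Z \<subseteq> D - R - {g} \<and> P (Z \<union> R)}" using X Z by auto
    qed
  qed
  thus ?thesis by (simp add: bij_betw_same_card)
qed

lemma run_decomp:
  fixes pos :: "nat \<Rightarrow> nat"
  assumes fin: "finite D" and bnd: "\<And>X. X \<subseteq> D \<Longrightarrow> P X \<Longrightarrow> card X \<le> t"
    and inj: "inj_on pos {..t}" and sub: "pos ` {..<t} \<subseteq> D"
  shows "card {X. X \<subseteq> D \<and> pos 0 \<in> X \<and> P X}
       = (\<Sum>r\<in>{1..t}. card {Z. Z \<subseteq> D - pos ` {..<r} - {pos r} \<and> P (Z \<union> pos ` {..<r})})"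
proof -
  define A where "A r = {X. X \<subseteq> D \<and> pos ` {..<r} \<subseteq> X \<and> pos r \<notin> X \<and> P X}" for r
  have eq: "{X. X \<subseteq> D \<and> pos 0 \<in> X \<and> P X} = (\<Union>r\<in>{1..t}. A r)"
  proof
    show "{X. X \<subseteq> D \<and> pos 0 \<in> X \<and> P X} \<subseteq> (\<Union>r\<in>{1..t}. A r)"
    proof
      fix X assume X: "X \<in> {X. X \<subseteq> D \<and> pos 0 \<in> X \<and> P X}"
      have finX: "finite X" using X fin finite_subset by auto
      have cX: "card X \<le> t" using X bnd by auto
      have "\<not> pos ` {..t} \<subseteq> X"
      proof
        assume "pos ` {..t} \<subseteq> X"
        hence "card (pos ` {..t}) \<le> card X" using finX by (rule card_mono[rotated])
        moreover have "card (pos ` {..t}) = Suc t" using inj by (simp add: card_image)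
        ultimately show False using cX by simp
      qed
      then obtain i where i: "i \<le> t" "pos i \<notin> X" by auto
      define r where "r = (LEAST i. pos i \<notin> X)"
      have r1: "pos r \<notin> X" unfolding r_def by (rule LeastI[of _ i]) (rule i(2))
      have r2: "r \<le> i" unfolding r_def by (rule Least_le) (rule i(2))
      have r3: "\<forall>j<r. pos j \<in> X" unfolding r_def using not_less_Least by blast
      have "r \<noteq> 0"
      proof
        assume "r = 0" thus False using r1 X by simp
      qed
      hence "r \<in> {1..t}" using r2 i by auto
      moreover have "X \<in> A r" unfolding A_def using X r1 r3 by auto
      ultimately show "X \<in> (\<Union>r\<in>{1..t}. A r)" by blast
    qed
    show "(\<Union>r\<in>{1..t}. A r) \<subseteq> {X. X \<subseteq> D \<and> pos 0 \<in> X \<and> P X}"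
      unfolding A_def by force
  qed
  have "card (\<Union>r\<in>{1..t}. A r) = (\<Sum>r\<in>{1..t}. card (A r))"
  proof (rule card_UN_disjoint)
    show "finite {1..t}" by simp
    show "\<forall>r\<in>{1..t}. finite (A r)" unfolding A_def using fin by (auto intro: fin_sub_family)
    show "\<forall>r\<in>{1..t}. \<forall>r'\<in>{1..t}. r \<noteq> r' \<longrightarrow> A r \<inter> A r' = {}"
    proof (intro ballI impI)
      fix r r' assume "r \<in> {1..t}" "r' \<in> {1..t}" "r \<noteq> r'"
      hence "r < r' \<or> r' < r" by auto
      thus "A r \<inter> A r' = {}" unfolding A_def by auto
    qed
  qed
  also have "\<dots> = (\<Sum>r\<in>{1..t}. card {Z. Z \<subseteq> D - pos ` {..<r} - {pos r} \<and> P (Z \<union> pos ` {..<r})})"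
  proof (rule sum.cong[OF refl])
    fix r assume r: "r \<in> {1..t}"
    have "pos ` {..<r} \<subseteq> D" using sub r by auto
    moreover have "pos r \<notin> pos ` {..<r}"
    proof
      assume "pos r \<in> pos ` {..<r}"
      then obtain j where "j < r" "pos r = pos j" by auto
      thus False using inj r unfolding inj_on_def by fastforce
    qed
    ultimately show "card (A r) = card {Z. Z \<subseteq> D - pos ` {..<r} - {pos r} \<and> P (Z \<union> pos ` {..<r})}"
      unfolding A_def by (rule card_run_remove)
  qed
  finally show ?thesis using eq by simp
qed

lemma img_plus: "(\<lambda>i. c + i) ` {..<r} = {c..<c+(r::nat)}"
proof (rule set_eqI)
  fix x show "x \<in> (\<lambda>i. c + i) ` {..<r} \<longleftrightarrow> x \<in> {c..<c+r}"
  proof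
    assume "x \<in> {c..<c+r}" thus "x \<in> (\<lambda>i. c + i) ` {..<r}"
      by (intro image_eqI[of _ _ "x - c"]) auto
  qed auto
qed

lemma img_minus: "r \<le> Suc a \<Longrightarrow> (\<lambda>i. a - i) ` {..<r} = {Suc a - r..<Suc (a::nat)}"
proof (rule set_eqI)
  fix x assume r: "r \<le> Suc a"
  show "x \<in> (\<lambda>i. a - i) ` {..<r} \<longleftrightarrow> x \<in> {Suc a - r..<Suc a}"
  proof
    assume "x \<in> {Suc a - r..<Suc a}" thus "x \<in> (\<lambda>i. a - i) ` {..<r}"
      by (intro image_eqI[of _ _ "a - x"]) auto
  qed (use r in auto)
qed

lemma shift_ok:
  assumes "(Z \<union> K) \<inter> {p..<p+r} = {}" "(Z \<union> K) \<inter> {q..<q+r} = {}" "p+r \<notin> Z \<union> K" "q+r \<notin> Z \<union> K"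
    "0 < p" "0 < q" "p - 1 \<notin> Z \<union> K" "q - 1 \<notin> Z \<union> K"
  shows "okK W F K (Z \<union> {p..<p+r}) \<longleftrightarrow> okK W F (K \<union> {q..<q+r}) Z"
proof -
  have e1: "Z \<union> {p..<p+r} \<union> K = (Z \<union> K) \<union> {p..<p+r}" by auto
  have e2: "Z \<union> (K \<union> {q..<q+r}) = (Z \<union> K) \<union> {q..<q+r}" by auto
  show ?thesis unfolding okK_def e1 e2 by (rule iso_ok[OF run_shift_iso[OF assms]])
qed

lemma cnt_zero:
  assumes "finite W" "card W = card K" "D \<inter> K = {}"
  shows "cnt W F D K = cnt W F {} K"
proof -
  have "{X. X \<subseteq> D \<and> okK W F K X} = {X. X \<subseteq> {} \<and> okK W F K X}"
  proof (rule Collect_cong)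
    fix X show "(X \<subseteq> D \<and> okK W F K X) = (X \<subseteq> {} \<and> okK W F K X)"
    proof
      assume a: "X \<subseteq> D \<and> okK W F K X"
      hence "X \<inter> K = {}" using assms by auto
      hence "finite X \<and> card X + card K = card W" using okK_card a assms by blast
      thus "X \<subseteq> {} \<and> okK W F K X" using a assms by auto
    qed auto
  qed
  thus ?thesis unfolding cnt_def by simp
qed



lemma core:
  fixes W :: "'b set" and F :: "'b set set"
  shows "finite W \<Longrightarrow> card W = t + card K \<Longrightarrow> finite K \<Longrightarrow> finite E \<Longrightarrow> a \<le> b \<Longrightarrow> t \<le> a
    \<Longrightarrow> E \<inter> {a..Suc b} = {} \<Longrightarrow> {a+1-t..<a} \<subseteq> E \<Longrightarrow> {b+2..b+t} \<subseteq> E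
    \<Longrightarrow> \<forall>x\<in>K. \<forall>y\<in>E \<union> {a..Suc b}. Suc y < x
    \<Longrightarrow> cnt W F (insert (Suc b) E) K = cnt W F (insert a E) K"
proof (induction t arbitrary: K E a b rule: less_induct)
  case (less t K E a b)
  note finW = less.prems(1) and cW = less.prems(2) and finK = less.prems(3) and finE = less.prems(4)
    and ab = less.prems(5) and ta = less.prems(6) and hole = less.prems(7) and lft = less.prems(8)
    and rgt = less.prems(9) and sep = less.prems(10)
  define U where "U = E \<union> {a..Suc b}"
  have finU: "finite U" unfolding U_def using finE by simp
  define m where "m = Suc (Suc (Max (U \<union> K)))"
  have m_gt: "Suc y < m" if "y \<in> U \<union> K" for y
  proof -
    have "y \<le> Max (U \<union> K)" using that finU finK by (intro Max_ge) auto
    thus ?thesis unfolding m_def by simp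
  qed
  define Kc where "Kc r = K \<union> {m..<m+r}" for r
  have sepU: "Suc y < x" if "x \<in> K" "y \<in> U" for x y using sep that unfolding U_def by auto
  have K_U: "K \<inter> U = {}" using sepU by fastforce
  have bnd: "card X \<le> t" if "X \<subseteq> U" "okK W F K X" for X
  proof -
    have "X \<inter> K = {}" using that K_U by auto
    thus ?thesis using okK_card[OF that(2) finW] cW by auto
  qed
  have Kc_sep: "Suc y < x" if "x \<in> Kc r" "y \<in> U" for x y r
    using that sepU m_gt unfolding Kc_def by fastforce
  have Kc_card: "card (Kc r) = card K + r" for r
  proof -
    have "K \<inter> {m..<m+r} = {}" using m_gt by fastforce
    thus ?thesis unfolding Kc_def using finK by (simp add: card_Un_disjoint)
  qed
  have Kc_fin: "finite (Kc r)" for r unfolding Kc_def using finK by simp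
  have nb: "Suc b \<notin> E" "a \<notin> E" "b \<notin> E" using hole ab by auto
  have R: "card {X. X \<subseteq> insert (Suc b) E \<and> Suc b \<in> X \<and> okK W F K X}
      = (\<Sum>r\<in>{1..t}. cnt W F (E - {b+2..b+r+1}) (Kc r))"
  proof -
    have "card {X. X \<subseteq> insert (Suc b) E \<and> (\<lambda>i. Suc b + i) 0 \<in> X \<and> okK W F K X}
       = (\<Sum>r\<in>{1..t}. card {Z. Z \<subseteq> insert (Suc b) E - (\<lambda>i. Suc b + i) ` {..<r} - {(\<lambda>i. Suc b + i) r}
             \<and> okK W F K (Z \<union> (\<lambda>i. Suc b + i) ` {..<r})})"
    proof (rule run_decomp)
      show "finite (insert (Suc b) E)" using finE by simp
      show "card X \<le> t" if "X \<subseteq> insert (Suc b) E" "okK W F K X" for X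
        by (rule bnd) (use that ab in \<open>auto simp: U_def\<close>)
      show "inj_on (\<lambda>i. Suc b + i) {..t}" by (auto simp: inj_on_def)
      show "(\<lambda>i. Suc b + i) ` {..<t} \<subseteq> insert (Suc b) E"
        unfolding img_plus
      proof
        fix x assume "x \<in> {Suc b..<Suc b + t}"
        thus "x \<in> insert (Suc b) E" using rgt by (cases "x = Suc b") auto
      qed
    qed
    also have "\<dots> = (\<Sum>r\<in>{1..t}. cnt W F (E - {b+2..b+r+1}) (Kc r))"
    proof (rule sum.cong[OF refl])
      fix r assume r: "r \<in> {1..t}"
      have dom: "insert (Suc b) E - {Suc b..<Suc b + r} - {Suc b + r} = E - {b+2..b+r+1}"
        using nb r by (auto simp: not_less_eq_eq dest: le_antisym)
      have runU: "{Suc b..<Suc b + r} \<subseteq> U"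
      proof
        fix x assume x: "x \<in> {Suc b..<Suc b + r}"
        show "x \<in> U"
        proof (cases "x = Suc b")
          case True thus ?thesis unfolding U_def using ab by auto
        next
          case False hence "x \<in> {b+2..b+t}" using x r by auto
          thus ?thesis using rgt unfolding U_def by auto
        qed
      qed
      have endU: "b + r \<in> U"
      proof (cases "r = 1")
        case True thus ?thesis unfolding U_def using ab by auto
      next
        case False hence "b + r \<in> {b+2..b+t}" using r by auto
        thus ?thesis using rgt unfolding U_def by auto
      qed
      have "okK W F K (Z \<union> {Suc b..<Suc b + r}) \<longleftrightarrow> okK W F (K \<union> {m..<m+r}) Z"
        if Z: "Z \<subseteq> E - {b+2..b+r+1}" for Z
      proof (rule shift_ok)
        have ZU: "Z \<subseteq> U" using Z unfolding U_def by auto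
        have "x \<notin> Z" if "x \<in> {Suc b..<Suc b + r}" for x using that Z nb by (cases "x = Suc b") auto
        thus "(Z \<union> K) \<inter> {Suc b..<Suc b + r} = {}"
          using runU K_U by blast
        show "(Z \<union> K) \<inter> {m..<m + r} = {}" using ZU m_gt by fastforce
        show "Suc b + r \<notin> Z \<union> K"
        proof
          assume "Suc b + r \<in> Z \<union> K"
          moreover have "Suc b + r \<notin> Z" using Z r by auto
          moreover have "Suc b + r \<notin> K" using sepU[OF _ endU] by fastforce
          ultimately show False by blast
        qed
        show "m + r \<notin> Z \<union> K" using ZU m_gt by fastforce
        show "0 < Suc b" by simp
        show "0 < m" unfolding m_def by simp
        show "Suc b - 1 \<notin> Z \<union> K"
        proof -
          have "b \<in> U" unfolding U_def using ab by auto
          hence "b \<notin> K" using sepU by fastforce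
          thus ?thesis using Z nb by auto
        qed
        show "m - 1 \<notin> Z \<union> K" using ZU m_gt by fastforce
      qed
      hence "{Z. Z \<subseteq> E - {b+2..b+r+1} \<and> okK W F K (Z \<union> {Suc b..<Suc b + r})}
           = {Z. Z \<subseteq> E - {b+2..b+r+1} \<and> okK W F (Kc r) Z}" unfolding Kc_def by blast
      thus "card {Z. Z \<subseteq> insert (Suc b) E - (\<lambda>i. Suc b + i) ` {..<r} - {(\<lambda>i. Suc b + i) r}
             \<and> okK W F K (Z \<union> (\<lambda>i. Suc b + i) ` {..<r})} = cnt W F (E - {b+2..b+r+1}) (Kc r)"
        unfolding img_plus cnt_def using dom by simp
    qed
    finally show ?thesis by simp
  qed
  have L: "card {X. X \<subseteq> insert a E \<and> a \<in> X \<and> okK W F K X}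
      = (\<Sum>r\<in>{1..t}. cnt W F (E - {a-r..<a}) (Kc r))"
  proof -
    have "card {X. X \<subseteq> insert a E \<and> (\<lambda>i. a - i) 0 \<in> X \<and> okK W F K X}
       = (\<Sum>r\<in>{1..t}. card {Z. Z \<subseteq> insert a E - (\<lambda>i. a - i) ` {..<r} - {(\<lambda>i. a - i) r}
             \<and> okK W F K (Z \<union> (\<lambda>i. a - i) ` {..<r})})"
    proof (rule run_decomp)
      show "finite (insert a E)" using finE by simp
      show "card X \<le> t" if "X \<subseteq> insert a E" "okK W F K X" for X
        by (rule bnd) (use that ab in \<open>auto simp: U_def\<close>)
      show "inj_on (\<lambda>i. a - i) {..t}" using ta by (auto simp: inj_on_def)
      show "(\<lambda>i. a - i) ` {..<t} \<subseteq> insert a E"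
        unfolding img_minus[of t a, OF le_SucI[OF ta]]
      proof
        fix x assume "x \<in> {Suc a - t..<Suc a}"
        thus "x \<in> insert a E" using lft by (cases "x = a") auto
      qed
    qed
    also have "\<dots> = (\<Sum>r\<in>{1..t}. cnt W F (E - {a-r..<a}) (Kc r))"
    proof (rule sum.cong[OF refl])
      fix r assume r: "r \<in> {1..t}"
      have rle: "r \<le> Suc a" using r ta by auto
      have dom: "insert a E - {Suc a - r..<Suc a} - {a - r} = E - {a-r..<a}"
        using nb r ta by (auto; (linarith | metis less_Suc_eq))
      have runU: "{Suc a - r..<Suc a - r + r} \<subseteq> U"
      proof
        fix x assume x: "x \<in> {Suc a - r..<Suc a - r + r}"
        show "x \<in> U"
        proof (cases "x = a")
          case True thus ?thesis unfolding U_def using ab by auto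
        next
          case False hence "x \<in> {a+1-t..<a}" using x r ta by auto
          thus ?thesis using lft unfolding U_def by auto
        qed
      qed
      have aU: "a \<in> U" unfolding U_def using ab by auto
      have a1U: "Suc a \<in> U" unfolding U_def using ab by auto
      have "okK W F K (Z \<union> {Suc a - r..<Suc a - r + r}) \<longleftrightarrow> okK W F (K \<union> {m..<m+r}) Z"
        if Z: "Z \<subseteq> E - {a-r..<a}" for Z
      proof (rule shift_ok)
        have ZU: "Z \<subseteq> U" using Z unfolding U_def by auto
        have "x \<notin> Z" if x: "x \<in> {Suc a - r..<Suc a - r + r}" for x
        proof (cases "x = a")
          case True thus ?thesis using Z nb by auto
        next
          case False hence "x \<in> {a-r..<a}" using x r ta by auto
          thus ?thesis using Z by auto
        qed
        thus "(Z \<union> K) \<inter> {Suc a - r..<Suc a - r + r} = {}"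
          using runU K_U by blast
        show "(Z \<union> K) \<inter> {m..<m + r} = {}" using ZU m_gt by fastforce
        show "Suc a - r + r \<notin> Z \<union> K"
        proof -
          have "Suc a \<notin> K" using sepU[OF _ a1U] by fastforce
          moreover have "Suc a \<notin> Z" using Z hole ab by auto
          ultimately show ?thesis using rle by simp
        qed
        show "m + r \<notin> Z \<union> K" using ZU m_gt by fastforce
        show "0 < Suc a - r" using r ta by simp
        show "0 < m" unfolding m_def by simp
        show "Suc a - r - 1 \<notin> Z \<union> K"
        proof -
          have "a - r \<notin> K" using sepU[OF _ aU] by fastforce
          moreover have "a - r \<notin> Z"
          proof -
            have "a - r \<in> {a-r..<a}" using r ta by auto
            thus ?thesis using Z by blast
          qed
          moreover have "Suc a - r - 1 = a - r" using rle by simp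
          ultimately show ?thesis by simp
        qed
        show "m - 1 \<notin> Z \<union> K" using ZU m_gt by fastforce
      qed
      hence "{Z. Z \<subseteq> E - {a-r..<a} \<and> okK W F K (Z \<union> {Suc a - r..<Suc a - r + r})}
           = {Z. Z \<subseteq> E - {a-r..<a} \<and> okK W F (Kc r) Z}" unfolding Kc_def by blast
      moreover have "Suc a - r + r = Suc a" using rle by simp
      ultimately show "card {Z. Z \<subseteq> insert a E - (\<lambda>i. a - i) ` {..<r} - {(\<lambda>i. a - i) r}
             \<and> okK W F K (Z \<union> (\<lambda>i. a - i) ` {..<r})} = cnt W F (E - {a-r..<a}) (Kc r)"
        unfolding img_minus[OF rle] cnt_def using dom by simp
    qed
    finally show ?thesis by simp
  qed
  have EQ: "cnt W F (E - {b+2..b+r+1}) (Kc r) = cnt W F (E - {a-r..<a}) (Kc r)" if r: "r \<in> {1..t}" for r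
  proof (cases "r = t")
    case True
    have c: "card W = card (Kc r)" using cW Kc_card True by simp
    have d1: "(E - {b+2..b+r+1}) \<inter> Kc r = {}" using Kc_sep unfolding U_def by fastforce
    have d2: "(E - {a-r..<a}) \<inter> Kc r = {}" using Kc_sep unfolding U_def by fastforce
    show ?thesis using cnt_zero[OF finW c d1] cnt_zero[OF finW c d2] by simp
  next
    case False
    hence rt: "r < t" using r by auto
    have r1: "1 \<le> r" using r by auto
    define G where "G = E - {a-r..b+r+1}"
    define D where "D j = G \<union> {a-r..<a-r+j} \<union> {b+2+j..b+r+1}" for j
    define Ej where "Ej j = G \<union> {a-r..<a-r+j} \<union> {b+3+j..b+r+1}" for j
    have bigU: "{a-r..b+r+1} \<subseteq> U"
    proof
      fix x assume x: "x \<in> {a-r..b+r+1}"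
      show "x \<in> U"
      proof (cases "x < a")
        case True hence "x \<in> {a+1-t..<a}" using x rt by auto
        thus ?thesis using lft unfolding U_def by auto
      next
        case False
        show ?thesis
        proof (cases "x \<le> Suc b")
          case True thus ?thesis using False unfolding U_def by auto
        next
          case False2: False
          hence "x \<in> {b+2..b+t}" using x rt by auto
          thus ?thesis using rgt unfolding U_def by auto
        qed
      qed
    qed
    have step: "cnt W F (D (Suc j)) (Kc r) = cnt W F (D j) (Kc r)" if j: "j < r" for j
    proof -
      have eD1: "D j = insert (Suc (b+1+j)) (Ej j)" unfolding D_def Ej_def using j by auto
      have eD2: "D (Suc j) = insert (a-r+j) (Ej j)" unfolding D_def Ej_def using j by auto
      have "cnt W F (insert (Suc (b+1+j)) (Ej j)) (Kc r) = cnt W F (insert (a-r+j) (Ej j)) (Kc r)"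
      proof (rule less.IH[of "t - r"])
        show "t - r < t" using r1 rt by simp
        show "finite W" by (rule finW)
        show "card W = t - r + card (Kc r)" using cW Kc_card rt by simp
        show "finite (Kc r)" by (rule Kc_fin)
        show "finite (Ej j)" unfolding Ej_def G_def using finE by simp
        show "a - r + j \<le> b + 1 + j" using ab by simp
        show "t - r \<le> a - r + j" using ta by simp
        show "Ej j \<inter> {a - r + j..Suc (b + 1 + j)} = {}" unfolding Ej_def G_def using j by auto
        show "{a - r + j + 1 - (t - r)..<a - r + j} \<subseteq> Ej j"
        proof
          fix x assume x: "x \<in> {a - r + j + 1 - (t - r)..<a - r + j}"
          show "x \<in> Ej j"
          proof (cases "x < a - r")
            case True
            hence "x \<in> {a+1-t..<a}" using x rt ta by auto
            hence "x \<in> E" using lft by auto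
            thus ?thesis unfolding Ej_def G_def using True by auto
          next
            case False thus ?thesis unfolding Ej_def using x by auto
          qed
        qed
        show "{b + 1 + j + 2..b + 1 + j + (t - r)} \<subseteq> Ej j"
        proof
          fix x assume x: "x \<in> {b + 1 + j + 2..b + 1 + j + (t - r)}"
          show "x \<in> Ej j"
          proof (cases "x \<le> b + r + 1")
            case True thus ?thesis unfolding Ej_def using x by auto
          next
            case False
            hence "x \<in> {b+2..b+t}" using x rt j by auto
            hence "x \<in> E" using rgt by auto
            thus ?thesis unfolding Ej_def G_def using False by auto
          qed
        qed
        show "\<forall>x\<in>Kc r. \<forall>y\<in>Ej j \<union> {a - r + j..Suc (b + 1 + j)}. Suc y < x"
        proof (intro ballI)
          fix x y assume x: "x \<in> Kc r" and y: "y \<in> Ej j \<union> {a - r + j..Suc (b + 1 + j)}"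
          have "y \<in> U"
          proof (cases "y \<in> G")
            case True thus ?thesis unfolding G_def U_def by auto
          next
            case False hence "y \<in> {a-r..b+r+1}" using y j ab unfolding Ej_def by auto
            thus ?thesis using bigU by auto
          qed
          thus "Suc y < x" using Kc_sep[OF x] by auto
        qed
      qed
      thus ?thesis using eD1 eD2 by simp
    qed
    have chain: "j \<le> r \<Longrightarrow> cnt W F (D j) (Kc r) = cnt W F (D 0) (Kc r)" for j
    proof (induction j)
      case 0 thus ?case by simp
    next
      case (Suc j) thus ?case using step[of j] by simp
    qed
    have D0: "D 0 = E - {a-r..<a}"
    proof -
      have "{b+2..b+r+1} \<subseteq> E" using rgt rt by auto
      thus ?thesis unfolding D_def G_def using hole ab by auto
    qed
    have Dr: "D r = E - {b+2..b+r+1}"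
    proof -
      have "{a-r..<a} \<subseteq> E"
      proof
        fix x assume "x \<in> {a-r..<a}"
        hence "x \<in> {a+1-t..<a}" using rt ta by auto
        thus "x \<in> E" using lft by blast
      qed
      thus ?thesis unfolding D_def G_def using hole ta rt ab by auto
    qed
    show ?thesis using chain[of r] D0 Dr by simp
  qed
  have "cnt W F (insert (Suc b) E) K = cnt W F E K + card {X. X \<subseteq> insert (Suc b) E \<and> Suc b \<in> X \<and> okK W F K X}"
    by (rule cnt_split) (use finE nb in auto)
  also have "\<dots> = cnt W F E K + card {X. X \<subseteq> insert a E \<and> a \<in> X \<and> okK W F K X}"
    unfolding R L using EQ by simp
  also have "\<dots> = cnt W F (insert a E) K"
    by (rule cnt_split[symmetric]) (use finE nb in auto)
  finally show ?case .
qed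



fun model :: "nat \<Rightarrow> nat list \<Rightarrow> nat set" where
  "model s [] = {}"
| "model s (x # xs) = {s..<s+x} \<union> model (s + x + 1) xs"

lemma model_ge: "y \<in> model s xs \<Longrightarrow> s \<le> y"
proof (induction xs arbitrary: s)
  case Nil thus ?case by simp
next
  case (Cons x xs)
  show ?case
  proof (cases "y \<in> {s..<s+x}")
    case True thus ?thesis by simp
  next
    case False
    have "y \<in> {s..<s+x} \<union> model (s + x + 1) xs" using Cons.prems by simp
    hence "y \<in> model (s + x + 1) xs" using False by blast
    hence "s + x + 1 \<le> y" by (rule Cons.IH)
    thus ?thesis by simp
  qed
qed

lemma model_fin: "finite (model s xs)"
  by (induction xs arbitrary: s) auto

lemma move1:
  fixes W :: "'b set" and F :: "'b set set"
  assumes "finite W" "card W = k" "finite P" "P \<subseteq> {..<s}" "1 \<le> s" "k \<le> a" "k \<le> Suc b" "1 \<le> a"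
  shows "cnt W F (P \<union> model s ((a - 1) # Suc b # rest)) {} = cnt W F (P \<union> model s (a # b # rest)) {}"
proof -
  have a1: "1 \<le> a" using assms by simp
  define w where "w = s + a - 1"
  define E where "E = P \<union> {s..<w} \<union> {s+a+1..<s+a+1+b} \<union> model (s+a+b+2) rest"
  have e1: "P \<union> model s ((a - 1) # Suc b # rest) = insert (Suc w) E"
  proof -
    have "model s ((a - 1) # Suc b # rest) = {s..<s+a-1} \<union> {s+a..<s+a+Suc b} \<union> model (s+a+b+2) rest"
      using a1 by (simp add: Un_assoc)
    moreover have "{s+a..<s+a+Suc b} = insert (s+a) {s+a+1..<s+a+1+b}" by auto
    ultimately show ?thesis unfolding E_def w_def using a1 by (auto simp: Un_assoc)
  qed
  have e2: "P \<union> model s (a # b # rest) = insert w E"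
  proof -
    have "model s (a # b # rest) = {s..<s+a} \<union> {s+a+1..<s+a+1+b} \<union> model (s+a+b+2) rest"
      by (simp add: add.assoc Un_assoc)
    moreover have "{s..<s+a} = insert (s+a-1) {s..<s+a-1}" using a1 by auto
    ultimately show ?thesis unfolding E_def w_def by auto
  qed
  have "cnt W F (insert (Suc w) E) {} = cnt W F (insert w E) {}"
  proof (rule core[where t=k])
    show "finite W" by fact
    show "card W = k + card {}" using assms by simp
    show "finite {}" by simp
    show "finite E" unfolding E_def using assms model_fin by simp
    show "w \<le> w" by simp
    show "k \<le> w" unfolding w_def using assms by simp
    show "E \<inter> {w..Suc w} = {}"
    proof -
      have "x \<ge> s+a+b+2" if "x \<in> model (s+a+b+2) rest" for x using model_ge that by blast
      thus ?thesis unfolding E_def w_def using assms a1 by fastforce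
    qed
    show "{w + 1 - k..<w} \<subseteq> E" unfolding E_def w_def using assms by auto
    show "{w + 2..w + k} \<subseteq> E" unfolding E_def w_def using assms by auto
    show "\<forall>x\<in>{}. \<forall>y\<in>E \<union> {w..Suc w}. Suc y < x" by simp
  qed
  thus ?thesis using e1 e2 by simp
qed

lemma moveN:
  fixes W :: "'b set" and F :: "'b set set"
  assumes "finite W" "card W = k" "finite P" "P \<subseteq> {..<s}" "1 \<le> s" "k - 1 \<le> a" "k - 1 \<le> b"
  shows "cnt W F (P \<union> model s (a # b # rest)) {} = cnt W F (P \<union> model s ((k - 1) # (a + b - (k - 1)) # rest)) {}"
  using assms(6,7)
proof (induction "a - (k - 1)" arbitrary: a b)
  case 0 hence "a = k - 1" by simp
  thus ?case by simp
next
  case (Suc n)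
  have "cnt W F (P \<union> model s ((a - 1) # Suc b # rest)) {} = cnt W F (P \<union> model s (a # b # rest)) {}"
    by (rule move1[where k=k]) (use assms(1-5) Suc.prems Suc.hyps(2) in auto)
  moreover have "cnt W F (P \<union> model s ((a - 1) # Suc b # rest)) {}
      = cnt W F (P \<union> model s ((k - 1) # (a - 1 + Suc b - (k - 1)) # rest)) {}"
    by (rule Suc.hyps(1)) (use Suc.prems Suc.hyps(2) in auto)
  moreover have "a - 1 + Suc b = a + b" using Suc by simp
  ultimately show ?case by simp
qed

definition canon :: "nat \<Rightarrow> nat list \<Rightarrow> nat list" where
  "canon k xs = replicate (length xs - 1) (k - 1) @ [sum_list xs - (length xs - 1) * (k - 1)]"

lemma canon_eq:
  fixes W :: "'b set" and F :: "'b set set"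
  assumes "finite W" "card W = k"
  shows "finite P \<Longrightarrow> P \<subseteq> {..<s} \<Longrightarrow> 1 \<le> s \<Longrightarrow> k - 1 \<le> x \<Longrightarrow> \<forall>y\<in>set rest. k - 1 \<le> y
    \<Longrightarrow> cnt W F (P \<union> model s (x # rest)) {} = cnt W F (P \<union> model s (canon k (x # rest))) {}"
proof (induction rest arbitrary: x P s)
  case Nil thus ?case by (simp add: canon_def)
next
  case (Cons y rest)
  define z where "z = x + y - (k - 1)"
  have "cnt W F (P \<union> model s (x # y # rest)) {} = cnt W F (P \<union> model s ((k - 1) # z # rest)) {}"
    unfolding z_def by (rule moveN) (use assms Cons.prems in auto)
  also have "P \<union> model s ((k - 1) # z # rest) = (P \<union> {s..<s+(k-1)}) \<union> model (s + (k - 1) + 1) (z # rest)"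
    by (simp only: model.simps Un_assoc)
  also have "cnt W F \<dots> {} = cnt W F ((P \<union> {s..<s+(k-1)}) \<union> model (s + (k - 1) + 1) (canon k (z # rest))) {}"
    by (rule Cons.IH) (use Cons.prems in \<open>auto simp: z_def\<close>)
  also have "(P \<union> {s..<s+(k-1)}) \<union> model (s + (k - 1) + 1) (canon k (z # rest)) = P \<union> model s (canon k (x # y # rest))"
  proof -
    have "canon k (x # y # rest) = (k - 1) # canon k (z # rest)"
    proof -
      have aux: "c \<le> x \<Longrightarrow> x + (y + R) - Suc n * c = (x + y - c) + R - n * c" for c R n :: nat
        by (simp add: algebra_simps)
      have "sum_list (x # y # rest) - (length (y # rest)) * (k - 1)
          = sum_list (z # rest) - length rest * (k - 1)"
        using aux[of "k - 1" "sum_list rest" "length rest"] Cons.prems unfolding z_def by simp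
      thus ?thesis unfolding canon_def by simp
    qed
    thus ?thesis by (simp only: model.simps Un_assoc)
  qed
  finally show ?case .
qed

lemma model_count_eq:
  fixes W :: "'b set" and F :: "'b set set"
  assumes "finite W" "card W = k" "length xs = length ys" "sum_list xs = sum_list ys"
    "\<forall>y\<in>set xs. k - 1 \<le> y" "\<forall>y\<in>set ys. k - 1 \<le> y"
  shows "cnt W F (model 1 xs) {} = cnt W F (model 1 ys) {}"
proof (cases xs)
  case Nil thus ?thesis using assms by simp
next
  case (Cons x xs')
  then obtain y ys' where ys: "ys = y # ys'" using assms by (cases ys) auto
  have "cnt W F ({} \<union> model 1 (x # xs')) {} = cnt W F ({} \<union> model 1 (canon k (x # xs'))) {}"
    by (rule canon_eq) (use assms Cons in auto)
  moreover have "cnt W F ({} \<union> model 1 (y # ys')) {} = cnt W F ({} \<union> model 1 (canon k (y # ys'))) {}"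
    by (rule canon_eq) (use assms ys in auto)
  moreover have "canon k (x # xs') = canon k (y # ys')"
    using assms Cons ys unfolding canon_def by simp
  ultimately show ?thesis using Cons ys by simp
qed



lemma transfer_count:
  fixes H :: "nat \<Rightarrow> 'a" and E :: "'a set set"
  assumes bij: "bij_betw H M V" and edge: "\<forall>y\<in>M. \<forall>z\<in>M. {y,z} \<in> pe M \<longleftrightarrow> {H y, H z} \<in> E"
  shows "induced_count V E W F = cnt W F M {}"
proof -
  have injH: "inj_on H M" using bij by (simp add: bij_betw_def)
  have iso: "graph_iso Y (pe Y) (H ` Y) (induced_edges E (H ` Y))" if Y: "Y \<subseteq> M" for Y
  proof -
    have b: "bij_betw H Y (H ` Y)" using inj_on_subset[OF injH Y] by (simp add: bij_betw_def)
    have "\<forall>y\<in>Y. \<forall>z\<in>Y. {y,z} \<in> pe Y \<longleftrightarrow> {H y, H z} \<in> induced_edges E (H ` Y)"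
    proof (intro ballI)
      fix y z assume yz: "y \<in> Y" "z \<in> Y"
      have "{y,z} \<in> pe Y \<longleftrightarrow> {y,z} \<in> pe M" using yz Y by (auto simp: pe_mem)
      also have "\<dots> \<longleftrightarrow> {H y, H z} \<in> E" using edge yz Y by auto
      also have "\<dots> \<longleftrightarrow> {H y, H z} \<in> induced_edges E (H ` Y)" using yz by (auto simp: induced_edges_def)
      finally show "{y,z} \<in> pe Y \<longleftrightarrow> {H y, H z} \<in> induced_edges E (H ` Y)" .
    qed
    thus ?thesis using b unfolding graph_iso_def by blast
  qed
  have img: "image H ` {Y. Y \<subseteq> M \<and> okK W F {} Y} = {X. X \<subseteq> V \<and> graph_iso X (induced_edges E X) W F}"
  proof
    show "image H ` {Y. Y \<subseteq> M \<and> okK W F {} Y} \<subseteq> {X. X \<subseteq> V \<and> graph_iso X (induced_edges E X) W F}"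
    proof
      fix X assume "X \<in> image H ` {Y. Y \<subseteq> M \<and> okK W F {} Y}"
      then obtain Y where Y: "Y \<subseteq> M" "okK W F {} Y" "X = H ` Y" by auto
      have "graph_iso Y (pe Y) W F" using Y(2) unfolding okK_def by simp
      hence "graph_iso (H ` Y) (induced_edges E (H ` Y)) W F" using iso_ok[OF iso[OF Y(1)], of W F] by simp
      hence "graph_iso X (induced_edges E X) W F" using Y(3) by simp
      moreover have "X \<subseteq> V" using Y bij bij_betw_imp_surj_on by blast
      ultimately show "X \<in> {X. X \<subseteq> V \<and> graph_iso X (induced_edges E X) W F}" by simp
    qed
    show "{X. X \<subseteq> V \<and> graph_iso X (induced_edges E X) W F} \<subseteq> image H ` {Y. Y \<subseteq> M \<and> okK W F {} Y}"
    proof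
      fix X assume X: "X \<in> {X. X \<subseteq> V \<and> graph_iso X (induced_edges E X) W F}"
      define Y where "Y = inv_into M H ` X"
      have YM: "Y \<subseteq> M" unfolding Y_def using X bij
        by (auto simp: bij_betw_def inv_into_into)
      have HY: "H ` Y = X" unfolding Y_def using X bij
        by (auto simp: bij_betw_def f_inv_into_f image_image intro!: image_eqI)
      have "graph_iso Y (pe Y) W F" using iso_ok[OF iso[OF YM], of W F] HY X by simp
      hence "okK W F {} Y" unfolding okK_def by simp
      thus "X \<in> image H ` {Y. Y \<subseteq> M \<and> okK W F {} Y}" using YM HY by blast
    qed
  qed
  have "inj_on (image H) {Y. Y \<subseteq> M \<and> okK W F {} Y}"
    using inj_on_image_Pow[OF injH] by (rule inj_on_subset) auto
  hence "card (image H ` {Y. Y \<subseteq> M \<and> okK W F {} Y}) = card {Y. Y \<subseteq> M \<and> okK W F {} Y}"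
    by (rule card_image)
  thus ?thesis unfolding induced_count_def cnt_def img by simp
qed

lemma path_edge:
  assumes "distinct xs" "i < length xs" "j < length xs"
  shows "{xs!i, xs!j} \<in> {{xs!l, xs!Suc l} | l. Suc l < length xs} \<longleftrightarrow> (j = Suc i \<or> i = Suc j)"
proof
  assume "{xs!i, xs!j} \<in> {{xs!l, xs!Suc l} | l. Suc l < length xs}"
  then obtain l where l: "Suc l < length xs" "{xs!i, xs!j} = {xs!l, xs!Suc l}" by auto
  hence "(xs!i = xs!l \<and> xs!j = xs!Suc l) \<or> (xs!i = xs!Suc l \<and> xs!j = xs!l)"
    by (auto simp: doubleton_eq_iff)
  thus "j = Suc i \<or> i = Suc j" using assms l(1) by (auto simp: nth_eq_iff_index_eq)
next
  assume "j = Suc i \<or> i = Suc j"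
  thus "{xs!i, xs!j} \<in> {{xs!l, xs!Suc l} | l. Suc l < length xs}"
  proof
    assume "j = Suc i" thus ?thesis using assms by auto
  next
    assume "i = Suc j" thus ?thesis using assms by (auto simp: insert_commute)
  qed
qed

lemma path_card:
  assumes "distinct xs"
  shows "card {{xs!l, xs!Suc l} | l. Suc l < length xs} = length xs - 1"
proof -
  have eq: "{{xs!l, xs!Suc l} | l. Suc l < length xs} = (\<lambda>l. {xs!l, xs!Suc l}) ` {..<length xs - 1}"
    by auto
  have "inj_on (\<lambda>l. {xs!l, xs!Suc l}) {..<length xs - 1}"
  proof (rule inj_onI)
    fix i j assume i: "i \<in> {..<length xs - 1}" and j: "j \<in> {..<length xs - 1}"
      and e: "{xs!i, xs!Suc i} = {xs!j, xs!Suc j}"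
    hence "(xs!i = xs!j \<and> xs!Suc i = xs!Suc j) \<or> (xs!i = xs!Suc j \<and> xs!Suc i = xs!j)"
      by (auto simp: doubleton_eq_iff)
    thus "i = j" using assms i j by (auto simp: nth_eq_iff_index_eq)
  qed
  thus ?thesis unfolding eq by (simp add: card_image)
qed

lemma build:
  fixes ps :: "'a set list" and EE :: "'a set \<Rightarrow> 'a set set"
  assumes "distinct ps" "\<forall>p\<in>set ps. \<forall>q\<in>set ps. p \<noteq> q \<longrightarrow> p \<inter> q = {}"
    "\<forall>p\<in>set ps. is_path_graph p (EE p)"
  shows "\<exists>H. bij_betw H (model s (map card ps)) (\<Union>(set ps)) \<and>
    (\<forall>y\<in>model s (map card ps). \<forall>z\<in>model s (map card ps).
        {y,z} \<in> pe (model s (map card ps)) \<longleftrightarrow> (\<exists>p\<in>set ps. H y \<in> p \<and> H z \<in> p \<and> {H y, H z} \<in> EE p))"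
  using assms
proof (induction ps arbitrary: s)
  case Nil thus ?case by (auto simp: bij_betw_def)
next
  case (Cons p ps)
  obtain xs where xs: "xs \<noteq> []" "distinct xs" "set xs = p" "EE p = {{xs!i, xs!Suc i} | i. Suc i < length xs}"
    using Cons.prems(3) unfolding is_path_graph_def by auto
  define n where "n = length xs"
  have cp: "card p = n" unfolding n_def using xs distinct_card by metis
  define M' where "M' = model (s + n + 1) (map card ps)"
  have pr: "distinct ps" "\<forall>p\<in>set ps. \<forall>q\<in>set ps. p \<noteq> q \<longrightarrow> p \<inter> q = {}"
    "\<forall>p\<in>set ps. is_path_graph p (EE p)" using Cons.prems by simp_all
  obtain H' where H': "bij_betw H' M' (\<Union>(set ps))"
    "\<forall>y\<in>M'. \<forall>z\<in>M'. {y,z} \<in> pe M' \<longleftrightarrow> (\<exists>q\<in>set ps. H' y \<in> q \<and> H' z \<in> q \<and> {H' y, H' z} \<in> EE q)"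
    using Cons.IH[OF pr, of "s + n + 1"] unfolding M'_def by blast
  define H where "H y = (if y < s + n then xs ! (y - s) else H' y)" for y
  have M: "model s (map card (p # ps)) = {s..<s+n} \<union> M'" unfolding M'_def using cp by simp
  have M'ge: "y \<ge> s + n + 1" if "y \<in> M'" for y using model_ge that unfolding M'_def by blast
  have pdisj: "p \<inter> \<Union>(set ps) = {}"
  proof -
    have "p \<notin> set ps" using Cons.prems(1) by simp
    hence "\<forall>q\<in>set ps. p \<inter> q = {}" using Cons.prems(2) by auto
    thus ?thesis by blast
  qed
  have b1: "bij_betw H {s..<s+n} p"
  proof -
    have "bij_betw (\<lambda>y. y - s) {s..<s+n} {..<n}"
      by (rule bij_betw_byWitness[where f'="\<lambda>i. i + s"]) auto
    moreover have "bij_betw ((!) xs) {..<n} p" using xs unfolding n_def by (intro bij_betw_nth) auto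
    ultimately have "bij_betw ((!) xs \<circ> (\<lambda>y. y - s)) {s..<s+n} p" by (rule bij_betw_trans)
    thus ?thesis by (rule bij_betw_cong[THEN iffD1, rotated]) (auto simp: H_def)
  qed
  have b2: "bij_betw H M' (\<Union>(set ps))"
    using H'(1) by (rule bij_betw_cong[THEN iffD1, rotated]) (auto simp: H_def dest: M'ge)
  have bij: "bij_betw H (model s (map card (p # ps))) (\<Union>(set (p # ps)))"
    unfolding M using bij_betw_combine[OF b1 b2 pdisj] by simp
  have Hblock: "H y \<in> p" if "y \<in> {s..<s+n}" for y using b1 that by (auto simp: bij_betw_def)
  have Hrest: "H y \<in> \<Union>(set ps)" if "y \<in> M'" for y using b2 that by (auto simp: bij_betw_def)
  have edge: "{y,z} \<in> pe ({s..<s+n} \<union> M') \<longleftrightarrow> (\<exists>q\<in>set (p # ps). H y \<in> q \<and> H z \<in> q \<and> {H y, H z} \<in> EE q)"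
    if y: "y \<in> {s..<s+n} \<union> M'" and z: "z \<in> {s..<s+n} \<union> M'" for y z
  proof -
    have lhs: "{y,z} \<in> pe ({s..<s+n} \<union> M') \<longleftrightarrow> (z = Suc y \<or> y = Suc z)" using pe_adj[OF y z] .
    show ?thesis
    proof (cases "y \<in> {s..<s+n}")
      case yb: True
      show ?thesis
      proof (cases "z \<in> {s..<s+n}")
        case zb: True
        have "(\<exists>q\<in>set (p # ps). H y \<in> q \<and> H z \<in> q \<and> {H y, H z} \<in> EE q) \<longleftrightarrow> {H y, H z} \<in> EE p"
          using Hblock[OF yb] Hblock[OF zb] pdisj by auto
        also have "\<dots> \<longleftrightarrow> (z - s = Suc (y - s) \<or> y - s = Suc (z - s))"
        proof -
          have hy: "H y = xs ! (y - s)" "H z = xs ! (z - s)" using yb zb unfolding H_def by auto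
          have lt: "y - s < length xs" "z - s < length xs" using yb zb unfolding n_def by auto
          show ?thesis unfolding xs(4) hy using path_edge[OF xs(2) lt] .
        qed
        also have "\<dots> \<longleftrightarrow> (z = Suc y \<or> y = Suc z)" using yb zb by auto
        finally show ?thesis using lhs by simp
      next
        case False
        hence zM: "z \<in> M'" using z by auto
        have "\<not> (z = Suc y \<or> y = Suc z)" using yb M'ge[OF zM] by auto
        moreover have "\<not> (\<exists>q\<in>set (p # ps). H y \<in> q \<and> H z \<in> q \<and> {H y, H z} \<in> EE q)"
          using Hblock[OF yb] Hrest[OF zM] pdisj by (auto simp del: Union_iff; blast)
        ultimately show ?thesis using lhs by simp
      qed
    next
      case yn: False
      hence yM: "y \<in> M'" using y by auto
      show ?thesis
      proof (cases "z \<in> {s..<s+n}")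
        case zb: True
        have "\<not> (z = Suc y \<or> y = Suc z)" using zb M'ge[OF yM] by auto
        moreover have "\<not> (\<exists>q\<in>set (p # ps). H y \<in> q \<and> H z \<in> q \<and> {H y, H z} \<in> EE q)"
          using Hblock[OF zb] Hrest[OF yM] pdisj by (auto simp del: Union_iff; blast)
        ultimately show ?thesis using lhs by simp
      next
        case False
        hence zM: "z \<in> M'" using z by auto
        have hy: "H y = H' y" "H z = H' z" using M'ge[OF yM] M'ge[OF zM] unfolding H_def by auto
        have "(\<exists>q\<in>set (p # ps). H y \<in> q \<and> H z \<in> q \<and> {H y, H z} \<in> EE q)
            \<longleftrightarrow> (\<exists>q\<in>set ps. H' y \<in> q \<and> H' z \<in> q \<and> {H' y, H' z} \<in> EE q)"
          using Hrest[OF yM] pdisj hy by auto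
        also have "\<dots> \<longleftrightarrow> {y,z} \<in> pe M'" using H'(2) yM zM by auto
        also have "\<dots> \<longleftrightarrow> (z = Suc y \<or> y = Suc z)" using pe_adj[OF yM zM] .
        finally show ?thesis using lhs by simp
      qed
    qed
  qed
  show ?case using bij edge unfolding M by blast
qed



lemma side:
  fixes V :: "'a set" and E :: "'a set set" and W :: "'b set"
  assumes finV: "finite V" and pd: "path_decomposition V E P"
  shows "\<exists>ls. induced_count V E W F = cnt W F (model 1 ls) {} \<and> length ls = card P \<and>
      sum_list ls = card V \<and> card E + card P = card V \<and> set ls = card ` P"
proof -
  have part: "\<Union>P = V" "disjoint P" "{} \<notin> P" using pd unfolding path_decomposition_def partition_on_def by auto
  have path: "\<forall>p\<in>P. is_path_graph p (induced_edges E p)" and cover: "\<forall>e\<in>E. \<exists>p\<in>P. e \<subseteq> p"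
    using pd unfolding path_decomposition_def by auto
  have finP: "finite P" using finV part(1) by (metis finite_UnionD)
  have finp: "finite p" if "p \<in> P" for p using finV part(1) that by (metis Union_upper finite_subset)
  obtain ps where ps: "set ps = P" "distinct ps" using finite_distinct_list[OF finP] by blast
  have dj: "\<forall>p\<in>set ps. \<forall>q\<in>set ps. p \<noteq> q \<longrightarrow> p \<inter> q = {}"
    using part(2) ps(1) unfolding pairwise_def disjnt_def by blast
  obtain H where H: "bij_betw H (model 1 (map card ps)) (\<Union>(set ps))"
    "\<forall>y\<in>model 1 (map card ps). \<forall>z\<in>model 1 (map card ps).
        {y,z} \<in> pe (model 1 (map card ps)) \<longleftrightarrow> (\<exists>p\<in>set ps. H y \<in> p \<and> H z \<in> p \<and> {H y, H z} \<in> induced_edges E p)"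
    using build[OF ps(2) dj, of "induced_edges E" 1] path ps(1) by blast
  have bijV: "bij_betw H (model 1 (map card ps)) V" using H(1) ps(1) part(1) by simp
  have echar: "(\<exists>p\<in>P. u \<in> p \<and> v \<in> p \<and> {u,v} \<in> induced_edges E p) \<longleftrightarrow> {u,v} \<in> E" for u v
  proof
    assume "\<exists>p\<in>P. u \<in> p \<and> v \<in> p \<and> {u,v} \<in> induced_edges E p"
    thus "{u,v} \<in> E" by (auto simp: induced_edges_def)
  next
    assume e: "{u,v} \<in> E"
    then obtain p where "p \<in> P" "{u,v} \<subseteq> p" using cover by blast
    thus "\<exists>p\<in>P. u \<in> p \<and> v \<in> p \<and> {u,v} \<in> induced_edges E p" using e by (auto simp: induced_edges_def)
  qed
  have edge: "\<forall>y\<in>model 1 (map card ps). \<forall>z\<in>model 1 (map card ps).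
        {y,z} \<in> pe (model 1 (map card ps)) \<longleftrightarrow> {H y, H z} \<in> E"
    using H(2) echar ps(1) by auto
  have cnt_eq: "induced_count V E W F = cnt W F (model 1 (map card ps)) {}"
    by (rule transfer_count[OF bijV edge])
  have len: "length (map card ps) = card P" using ps distinct_card by fastforce
  have sumV: "sum_list (map card ps) = card V"
  proof -
    have "sum_list (map card ps) = sum card P" using ps by (simp add: sum_list_distinct_conv_sum_set)
    also have "\<dots> = card (\<Union>P)" using part(2) finp by (simp add: card_Union_disjoint)
    finally show ?thesis using part(1) by simp
  qed
  have cardE: "card E = (\<Sum>p\<in>P. card p - 1)"
  proof -
    have Eeq: "E = (\<Union>p\<in>P. induced_edges E p)" using cover by (auto simp: induced_edges_def)
    have ne: "e \<noteq> {}" if eP: "e \<in> induced_edges E p" and pP: "p \<in> P" for e p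
    proof -
      have "is_path_graph p (induced_edges E p)" using path pP by blast
      then obtain xs where xs: "induced_edges E p = {{xs ! i, xs ! Suc i} |i. Suc i < length xs}"
        unfolding is_path_graph_def by blast
      from eP obtain i where "e = {xs ! i, xs ! Suc i}" unfolding xs by blast
      thus ?thesis by simp
    qed
    have "card (\<Union>p\<in>P. induced_edges E p) = (\<Sum>p\<in>P. card (induced_edges E p))"
    proof (rule card_UN_disjoint[OF finP])
      show "\<forall>p\<in>P. finite (induced_edges E p)"
      proof
        fix p assume "p \<in> P"
        hence "induced_edges E p \<subseteq> Pow p" by (auto simp: induced_edges_def)
        thus "finite (induced_edges E p)" using finp \<open>p \<in> P\<close> by (meson finite_Pow_iff finite_subset)
      qed
      show "\<forall>p\<in>P. \<forall>q\<in>P. p \<noteq> q \<longrightarrow> induced_edges E p \<inter> induced_edges E q = {}"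
      proof (intro ballI impI)
        fix p q assume pq: "p \<in> P" "q \<in> P" "p \<noteq> q"
        hence "p \<inter> q = {}" using dj ps(1) by blast
        show "induced_edges E p \<inter> induced_edges E q = {}"
        proof (rule ccontr)
          assume "induced_edges E p \<inter> induced_edges E q \<noteq> {}"
          then obtain e where "e \<in> induced_edges E p" "e \<in> induced_edges E q" by blast
          moreover hence "e \<subseteq> p" "e \<subseteq> q" by (auto simp: induced_edges_def)
          ultimately show False using ne pq \<open>p \<inter> q = {}\<close> by blast
        qed
      qed
    qed
    moreover have "card (induced_edges E p) = card p - 1" if "p \<in> P" for p
    proof -
      have "is_path_graph p (induced_edges E p)" using path that by blast
      then obtain xs where xs: "xs \<noteq> []" "distinct xs" "set xs = p" "induced_edges E p = {{xs ! i, xs ! Suc i} |i. Suc i < length xs}"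
        unfolding is_path_graph_def by blast
      have "length xs = card p" using xs(2,3) distinct_card by metis
      thus ?thesis using path_card[OF xs(2)] xs(4) by simp
    qed
    ultimately show ?thesis using Eeq by simp
  qed
  have "card E + card P = card V"
  proof -
    have "card E + card P = (\<Sum>p\<in>P. card p - 1) + (\<Sum>p\<in>P. 1)" using cardE by simp
    also have "\<dots> = (\<Sum>p\<in>P. card p - 1 + 1)" by (rule sum.distrib[symmetric])
    also have "\<dots> = (\<Sum>p\<in>P. card p)"
    proof (rule sum.cong[OF refl])
      fix p assume p: "p \<in> P"
      have "p \<noteq> {}" using p part(3) by blast
      hence "card p \<noteq> 0" using finp[OF p] by simp
      thus "card p - 1 + 1 = card p" by simp
    qed
    also have "\<dots> = card V" using sumV ps by (simp add: sum_list_distinct_conv_sum_set)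
    finally show ?thesis .
  qed
  moreover have "set (map card ps) = card ` P" using ps by simp
  ultimately show ?thesis using cnt_eq len sumV by blast
qed

theorem theorem2p4:
  fixes V :: "'a set" and E :: "'a set set"
    and V' :: "'c set" and E' :: "'c set set"
    and W :: "'b set" and F :: "'b set set"
    and k :: nat
  assumes "finite W" and "linear_forest W F" and "card W = k"
    and "finite V" and "\<exists>P. path_decomposition V E P \<and> (\<forall>p\<in>P. k - 1 \<le> card p)"
    and "finite V'" and "\<exists>P. path_decomposition V' E' P \<and> (\<forall>p\<in>P. k - 1 \<le> card p)"
    and "card V = card V'" and "card E = card E'"
  shows "induced_count V E W F = induced_count V' E' W F"
proof -
  obtain P where P: "path_decomposition V E P" "\<forall>p\<in>P. k - 1 \<le> card p" using assms(5) by blast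
  obtain P' where P': "path_decomposition V' E' P'" "\<forall>p\<in>P'. k - 1 \<le> card p" using assms(7) by blast
  obtain ls where ls: "induced_count V E W F = cnt W F (model 1 ls) {}" "length ls = card P"
      "sum_list ls = card V" "card E + card P = card V" "set ls = card ` P"
    using side[OF assms(4) P(1), of W F] by blast
  obtain ls' where ls': "induced_count V' E' W F = cnt W F (model 1 ls') {}" "length ls' = card P'"
      "sum_list ls' = card V'" "card E' + card P' = card V'" "set ls' = card ` P'"
    using side[OF assms(6) P'(1), of W F] by blast
  have "cnt W F (model 1 ls) {} = cnt W F (model 1 ls') {}"
  proof (rule model_count_eq[OF assms(1) assms(3)])
    show "length ls = length ls'" using ls ls' assms(8,9) by simp
    show "sum_list ls = sum_list ls'" using ls ls' assms(8) by simp
    show "\<forall>y\<in>set ls. k - 1 \<le> y" using ls(5) P(2) by auto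
    show "\<forall>y\<in>set ls'. k - 1 \<le> y" using ls'(5) P'(2) by auto
  qed
  thus ?thesis using ls(1) ls'(1) by simp
qed


end
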